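(* Let $q\in(0,1)$, $\alpha>\gamma>0$, $r=\gamma/\alpha$, and $t\ge0$. With $W_t$ and $\iota$ as in the context, the random element $\iota(W_t)$ of $\mathcal{H}_{q,r}(B_n)$ has the same distribution as $W_t$.
   Context: $B_n$ is the hyperoctahedral group of signed permutations $\pi$ of $\{-n,\dots,-1,1,\dots,n\}$ with $\pi(-i)=-\pi(i)$. Its Coxeter generators are $s_0=(-1,1)$ and $s_k=(k,k+1)$ for $0<k<n$. The length $l(\pi)$ is the minimal number of generators needed to write $\pi$. Set $q_k=q$ for $k>0$ and $q_0=r$. The Hecke algebra $\mathcal{H}=\mathcal{H}_{q,r}(B_n)$ is the associative algebra over $\mathbb{C}(q,r)$ with basis $\{T_w:w\in B_n\}$ and relations $T_uT_w=T_{uw}$ if $l(uw)=l(u)+l(w)$, and $(T_k+q_k)(T_k-1)=0$ with $T_k=T_{s_k}$. The map $\iota$ is the linear anti-involution of $\mathcal{H}$ determined by $\iota(T_w)=T_{w^{-1}}$ for all $w\in B_n$. Definition of $W_t$: attach independent Poisson clocks of rate $1$ to each $k\in\{1,\dots,n-1\}$ and of rate $\alpha$ to $k=0$. Set $W_0=T_{id}$, and each time the clock of $k$ rings, multiply on the left by $T_k$. *)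

theory Defs
  imports "HOL-Probability.Probability"
begin

text \<open>A signed permutation of {-n..-1,1..n} is represented as a bijection of int that
  is odd (pi(-i) = -pi(i)) and fixes every i with |i| > n (hence also 0).
  The group product is composition: (pi sigma)(i) = pi(sigma(i)).\<close>

definition Bn :: "nat \<Rightarrow> (int \<Rightarrow> int) set" where
  "Bn n = {\<pi>. bij \<pi> \<and> (\<forall>i. \<pi> (-i) = - \<pi> i) \<and> (\<forall>i. \<bar>i\<bar> > int n \<longrightarrow> \<pi> i = i)}"

definition gen :: "nat \<Rightarrow> int \<Rightarrow> int" where
  "gen k = (if k = 0 then (\<lambda>i. if i = 1 then -1 else if i = -1 then 1 else i)
            else (\<lambda>i. if i = int k then int k + 1 else if i = int k + 1 then int k
                      else if i = - int k then - int k - 1 else if i = - int k - 1 then - int k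
                      else i))"

definition word_prod :: "nat list \<Rightarrow> int \<Rightarrow> int" where
  "word_prod ks = foldr (\<lambda>k f. gen k \<circ> f) ks id"

definition len :: "nat \<Rightarrow> (int \<Rightarrow> int) \<Rightarrow> nat" where
  "len n \<pi> = (LEAST m. \<exists>ks. length ks = m \<and> set ks \<subseteq> {0..<n} \<and> word_prod ks = \<pi>)"

text \<open>An element sum_w c_w T_w is represented by its coefficient function
  c :: (int => int) => real (with support in Bn n).  The basis element T_w:\<close>
definition basisT :: "(int \<Rightarrow> int) \<Rightarrow> ((int \<Rightarrow> int) \<Rightarrow> real)" where
  "basisT w = (\<lambda>v. if v = w then 1 else 0)"

definition qpar :: "real \<Rightarrow> real \<Rightarrow> nat \<Rightarrow> real" where
  "qpar q r k = (if k = 0 then r else q)"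

text \<open>Left multiplication by T_k = T_{s_k}, extended linearly from the rules
  T_s T_w = T_{sw} if l(sw) = l(w)+1, and T_s T_w = (1-q_s) T_w + q_s T_{sw} if l(sw) < l(w)
  (the latter from T_s^2 = (1-q_s) T_s + q_s, i.e. (T_s+q_s)(T_s-1)=0).\<close>
definition Tmul :: "nat \<Rightarrow> real \<Rightarrow> real \<Rightarrow> nat \<Rightarrow> ((int \<Rightarrow> int) \<Rightarrow> real) \<Rightarrow> ((int \<Rightarrow> int) \<Rightarrow> real)" where
  "Tmul n q r k h = (\<lambda>v.
     if v \<notin> Bn n then 0
     else if len n (gen k \<circ> v) < len n v then h (gen k \<circ> v) + (1 - qpar q r k) * h v
     else qpar q r k * h (gen k \<circ> v))"

definition iota :: "nat \<Rightarrow> ((int \<Rightarrow> int) \<Rightarrow> real) \<Rightarrow> ((int \<Rightarrow> int) \<Rightarrow> real)" where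
  "iota n h = (\<lambda>w. if w \<in> Bn n then h (inv w) else 0)"

text \<open>Given the chronological list of rung clocks [k_1,...,k_m],
  W = T_{k_m} ... T_{k_1} T_id.\<close>
definition Wword :: "nat \<Rightarrow> real \<Rightarrow> real \<Rightarrow> nat list \<Rightarrow> ((int \<Rightarrow> int) \<Rightarrow> real)" where
  "Wword n q r ks = foldl (\<lambda>h k. Tmul n q r k h) (basisT id) ks"

text \<open>Independent Poisson clocks of rate alpha (at k = 0) and rate 1 (at k = 1..n-1):
  by superposition, the number of rings in [0,t] is Poisson((alpha + n - 1) t) and
  the labels of the successive rings are i.i.d., equal to k with probability
  rate_k / (alpha + n - 1), independent of the number of rings.\<close>
definition label_pmf :: "nat \<Rightarrow> real \<Rightarrow> nat pmf" where
  "label_pmf n \<alpha> = do {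
     b \<leftarrow> bernoulli_pmf (\<alpha> / (\<alpha> + real n - 1));
     if b then return_pmf 0 else map_pmf Suc (pmf_of_set {0..<n - 1}) }"

definition rings_pmf :: "nat \<Rightarrow> real \<Rightarrow> real \<Rightarrow> nat list pmf" where
  "rings_pmf n \<alpha> t = do {
     m \<leftarrow> (if t = 0 then return_pmf 0 else poisson_pmf ((\<alpha> + real n - 1) * t));
     replicate_pmf m (label_pmf n \<alpha>) }"

definition W_law :: "nat \<Rightarrow> real \<Rightarrow> real \<Rightarrow> real \<Rightarrow> real \<Rightarrow> ((int \<Rightarrow> int) \<Rightarrow> real) pmf" where
  "W_law n q r \<alpha> t = map_pmf (Wword n q r) (rings_pmf n \<alpha> t)"

end

theory Submission
  imports Defs
begin


lemma gen_gen[simp]: "gen k (gen k x) = x"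
  unfolding gen_def by auto

lemma gen_comp_gen[simp]: "gen k \<circ> gen k = id"
  by (auto simp: fun_eq_iff)

lemma bij_gen: "bij (gen k)"
  using o_bij[OF gen_comp_gen gen_comp_gen] .

lemma inv_gen: "inv (gen k) = gen k"
  by (rule inv_unique_comp) auto

lemma gen_odd: "gen k (-i) = - gen k i"
  unfolding gen_def by auto

lemma gen_in: "k < n \<Longrightarrow> gen k \<in> Bn n"
  unfolding Bn_def using bij_gen gen_odd
  by (auto simp: gen_def)

lemma BnD: assumes "w \<in> Bn n" shows "bij w" "w (-i) = - w i" "\<bar>i\<bar> > int n \<Longrightarrow> w i = i"
  using assms unfolding Bn_def by auto

lemma Bn_zero: "w \<in> Bn n \<Longrightarrow> w 0 = 0"
  using BnD(2)[of w n 0] by simp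

lemma Bn_inj: "w \<in> Bn n \<Longrightarrow> w x = w y \<longleftrightarrow> x = y"
  using BnD(1) bij_is_inj inj_eq by metis

lemma Bn_bound: assumes "w \<in> Bn n" "\<bar>i\<bar> \<le> int n" shows "\<bar>w i\<bar> \<le> int n"
proof (rule ccontr)
  assume c: "\<not> \<bar>w i\<bar> \<le> int n"
  then have "w (w i) = w i" using BnD(3)[OF assms(1)] by simp
  then have "w i = i" using Bn_inj[OF assms(1)] by simp
  then show False using c assms(2) by simp
qed

lemma Bn_comp: "v \<in> Bn n \<Longrightarrow> w \<in> Bn n \<Longrightarrow> v \<circ> w \<in> Bn n"
  unfolding Bn_def by (auto intro: bij_comp)

lemma Bn_id: "id \<in> Bn n"
  unfolding Bn_def by auto

lemma Bn_inv: assumes "w \<in> Bn n" shows "inv w \<in> Bn n"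
proof -
  have b: "bij w" using BnD(1)[OF assms] .
  have "inv w (-i) = - inv w i" for i
  proof -
    have "w (- inv w i) = - i" using BnD(2)[OF assms, of "inv w i"] bij_inv_eq_iff[OF b] by auto
    then show ?thesis using bij_inv_eq_iff[OF b] by metis
  qed
  moreover have "\<bar>i\<bar> > int n \<Longrightarrow> inv w i = i" for i
    using BnD(3)[OF assms] bij_inv_eq_iff[OF b] by metis
  ultimately show ?thesis unfolding Bn_def using bij_imp_bij_inv[OF b] by auto
qed

lemma inv_inv_Bn: "w \<in> Bn n \<Longrightarrow> inv (inv w) = w"
  using BnD(1) inv_inv_eq by metis

lemma word_prod_Nil[simp]: "word_prod [] = id"
  unfolding word_prod_def by simp

lemma word_prod_Cons[simp]: "word_prod (k # ks) = gen k \<circ> word_prod ks"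
  unfolding word_prod_def by simp

lemma word_prod_snoc: "word_prod (ks @ [k]) = word_prod ks \<circ> gen k"
  by (induction ks) (auto simp: comp_assoc)

lemma word_prod_in: "set ks \<subseteq> {0..<n} \<Longrightarrow> word_prod ks \<in> Bn n"
  by (induction ks) (auto intro: Bn_comp gen_in Bn_id)

lemma word_prod_rev: "word_prod (rev ks) \<circ> word_prod ks = id"
proof (induction ks)
  case Nil then show ?case by simp
next
  case (Cons k ks)
  have "word_prod (rev (k#ks)) \<circ> word_prod (k#ks) = word_prod (rev ks) \<circ> (gen k \<circ> gen k) \<circ> word_prod ks"
    by (simp add: word_prod_snoc fun_eq_iff)
  also have "\<dots> = id" by (simp only: gen_comp_gen comp_id Cons.IH)
  finally show ?case .
qed

lemma word_prod_rev_inv: "word_prod (rev ks) = inv (word_prod ks)"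
proof -
  have "word_prod ks \<circ> word_prod (rev ks) = id"
    using word_prod_rev[of "rev ks"] by simp
  then show ?thesis using word_prod_rev[of ks] by (metis inv_unique_comp)
qed



definition Yset :: "nat \<Rightarrow> int set" where "Yset n = {-int n..int n}"
definition Icnt :: "nat \<Rightarrow> (int \<Rightarrow> int) \<Rightarrow> int" where
  "Icnt n w = (\<Sum>p\<in>Yset n \<times> Yset n. if fst p < snd p \<and> w (snd p) < w (fst p) then 1 else 0)"
definition negc :: "nat \<Rightarrow> (int \<Rightarrow> int) \<Rightarrow> int" where
  "negc n w = (\<Sum>x\<in>Yset n. if 0 < x \<and> w x < 0 then 1 else 0)"
definition N2 :: "nat \<Rightarrow> (int \<Rightarrow> int) \<Rightarrow> int" where
  "N2 n w = Icnt n w - negc n w"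
definition desc :: "(int \<Rightarrow> int) \<Rightarrow> nat \<Rightarrow> bool" where
  "desc w k = (if k = 0 then w 1 < 0 else w (int k + 1) < w (int k))"

lemma sum_reindex_invol:
  assumes "\<And>x. x \<in> A \<Longrightarrow> \<sigma> x \<in> A" "\<And>x. \<sigma> (\<sigma> x) = x"
  shows "(\<Sum>x\<in>A. f (\<sigma> x)) = (\<Sum>x\<in>A. f x)"
  by (rule sum.reindex_bij_witness[of A \<sigma> \<sigma>]) (use assms in auto)

lemma gen_Y: "k < n \<Longrightarrow> x \<in> Yset n \<Longrightarrow> gen k x \<in> Yset n"
  unfolding Yset_def gen_def by auto

lemma gen_order_pos:
  assumes "1 \<le> k" "(x, y) \<notin> {(int k, int k + 1), (int k + 1, int k), (- int k - 1, - int k), (- int k, - int k - 1)}"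
  shows "gen k x < gen k y \<longleftrightarrow> x < y"
  using assms unfolding gen_def by auto

lemma gen_order_zero:
  assumes "(x, y) \<notin> {(-1, 0), (0, -1), (0, 1), (1, 0), (-1, 1), (1, -1)}"
  shows "gen 0 x < gen 0 y \<longleftrightarrow> x < y"
  using assms unfolding gen_def by auto

lemma gen_sign_pos: "1 \<le> k \<Longrightarrow> 0 < gen k x \<longleftrightarrow> 0 < x"
  unfolding gen_def by auto

lemma gen_sign_zero: "x \<notin> {-1, 1} \<Longrightarrow> 0 < gen 0 x \<longleftrightarrow> 0 < x"
  unfolding gen_def by auto

lemma Icnt_comp:
  assumes "k < n"
  shows "Icnt n (w \<circ> gen k) = (\<Sum>p\<in>Yset n \<times> Yset n.
     if gen k (fst p) < gen k (snd p) \<and> w (snd p) < w (fst p) then 1 else 0)"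
proof -
  let ?f = "\<lambda>p. if gen k (fst p) < gen k (snd p) \<and> w (snd p) < w (fst p) then 1 else (0::int)"
  have "Icnt n (w \<circ> gen k) = (\<Sum>p\<in>Yset n \<times> Yset n. ?f (map_prod (gen k) (gen k) p))"
    unfolding Icnt_def by (intro sum.cong) auto
  also have "\<dots> = (\<Sum>p\<in>Yset n \<times> Yset n. ?f p)"
    using sum_reindex_invol[of "Yset n \<times> Yset n" "map_prod (gen k) (gen k)" ?f]
    by (auto simp: gen_Y assms)
  finally show ?thesis .
qed

lemma negc_comp:
  assumes "k < n"
  shows "negc n (w \<circ> gen k) = (\<Sum>x\<in>Yset n. if 0 < gen k x \<and> w x < 0 then 1 else 0)"
proof -
  let ?f = "\<lambda>x. if 0 < gen k x \<and> w x < 0 then 1 else (0::int)"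
  have "negc n (w \<circ> gen k) = (\<Sum>x\<in>Yset n. ?f (gen k x))"
    unfolding negc_def by (intro sum.cong) auto
  also have "\<dots> = (\<Sum>x\<in>Yset n. ?f x)"
    using sum_reindex_invol[of "Yset n" "gen k" ?f] by (auto simp: gen_Y assms)
  finally show ?thesis .
qed

lemma finite_Y[simp]: "finite (Yset n)" unfolding Yset_def by simp

lemma N2_step_pos:
  assumes w: "w \<in> Bn n" and k: "k < n" "1 \<le> k"
  shows "N2 n (w \<circ> gen k) = N2 n w + (if desc w k then -2 else 2)"
proof -
  define K where "K = int k"
  have K1: "K \<ge> 1" "K + 1 \<le> int n" using k unfolding K_def by auto
  define S where "S = {(K, K + 1), (K + 1, K), (- K - 1, - K), (- K, - K - 1)}"
  let ?A = "\<lambda>p. if gen k (fst p) < gen k (snd p) \<and> w (snd p) < w (fst p) then 1 else (0::int)"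
  let ?B = "\<lambda>p. if fst p < snd p \<and> w (snd p) < w (fst p) then 1 else (0::int)"
  have SY: "S \<subseteq> Yset n \<times> Yset n" unfolding S_def Yset_def using K1 by auto
  have "Icnt n (w \<circ> gen k) - Icnt n w = (\<Sum>p\<in>Yset n \<times> Yset n. ?A p - ?B p)"
  proof -
    have "Icnt n (w \<circ> gen k) = (\<Sum>p\<in>Yset n \<times> Yset n. ?A p)" by (rule Icnt_comp[OF k(1)])
    moreover have "Icnt n w = (\<Sum>p\<in>Yset n \<times> Yset n. ?B p)" by (simp add: Icnt_def)
    ultimately show ?thesis by (simp add: sum_subtractf)
  qed
  also have "\<dots> = (\<Sum>p\<in>S. ?A p - ?B p)"
  proof (rule sum.mono_neutral_right)
    have z: "?A p - ?B p = 0" if "p \<in> Yset n \<times> Yset n - S" for p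
    proof -
      from that have "(fst p, snd p) \<notin> S" by auto
      then have "gen k (fst p) < gen k (snd p) \<longleftrightarrow> fst p < snd p"
        using gen_order_pos[OF k(2)] unfolding S_def K_def by blast
      then show "?A p - ?B p = 0" by simp
    qed
    then show "\<forall>p\<in>Yset n \<times> Yset n - S. ?A p - ?B p = 0" by blast
  qed (use SY in auto)
  also have "\<dots> = (if desc w k then -2 else 2)"
  proof -
    have o1: "w (- K) = - w K" "w (- K - 1) = - w (K + 1)"
    proof -
      have e: "- K - 1 = - (K + 1)" by simp
      show "w (- K) = - w K" "w (- K - 1) = - w (K + 1)"
        using BnD(2)[OF w, of K] BnD(2)[OF w, of "K+1"] unfolding e by auto
    qed
    have ne: "w K \<noteq> w (K + 1)" using Bn_inj[OF w] by simp
    have g: "gen k K = K + 1" "gen k (K + 1) = K" "gen k (-K) = -K - 1" "gen k (-K - 1) = -K"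
      using K1 unfolding gen_def K_def by auto
    have d: "desc w k = (w (K + 1) < w K)" unfolding desc_def K_def using k by auto
    show ?thesis unfolding S_def using K1 ne by (auto simp: g o1 d)
  qed
  finally have I: "Icnt n (w \<circ> gen k) = Icnt n w + (if desc w k then -2 else 2)" by simp
  have "negc n (w \<circ> gen k) = negc n w"
    using negc_comp[OF k(1), of w] gen_sign_pos[OF k(2)] by (simp add: negc_def)
  then show ?thesis using I unfolding N2_def by simp
qed

lemma N2_step_zero:
  assumes w: "w \<in> Bn n" and k: "0 < n"
  shows "N2 n (w \<circ> gen 0) = N2 n w + (if desc w 0 then -2 else 2)"
proof -
  have n1: "1 \<le> int n" using k by simp
  define S :: "(int \<times> int) set" where "S = {(-1, 0), (0, -1), (0, 1), (1, 0), (-1, 1), (1, -1)}"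
  let ?A = "\<lambda>p. if gen 0 (fst p) < gen 0 (snd p) \<and> w (snd p) < w (fst p) then 1 else (0::int)"
  let ?B = "\<lambda>p. if fst p < snd p \<and> w (snd p) < w (fst p) then 1 else (0::int)"
  have SY: "S \<subseteq> Yset n \<times> Yset n" unfolding S_def Yset_def using n1 by auto
  have o1: "w (- 1) = - w 1" using BnD(2)[OF w, of 1] by simp
  have z: "w 0 = 0" using Bn_zero[OF w] .
  have ne: "w 1 \<noteq> 0" using Bn_inj[OF w, of 1 0] z by simp
  have g: "gen 0 1 = -1" "gen 0 (-1) = 1" "gen 0 0 = 0" unfolding gen_def by auto
  have d: "desc w 0 = (w 1 < 0)" unfolding desc_def by auto
  have "Icnt n (w \<circ> gen 0) - Icnt n w = (\<Sum>p\<in>Yset n \<times> Yset n. ?A p - ?B p)"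
  proof -
    have "Icnt n (w \<circ> gen 0) = (\<Sum>p\<in>Yset n \<times> Yset n. ?A p)" by (rule Icnt_comp[OF k])
    moreover have "Icnt n w = (\<Sum>p\<in>Yset n \<times> Yset n. ?B p)" by (simp add: Icnt_def)
    ultimately show ?thesis by (simp add: sum_subtractf)
  qed
  also have "\<dots> = (\<Sum>p\<in>S. ?A p - ?B p)"
  proof (rule sum.mono_neutral_right)
    have z: "?A p - ?B p = 0" if "p \<in> Yset n \<times> Yset n - S" for p
    proof -
      from that have "(fst p, snd p) \<notin> S" by auto
      then have "gen 0 (fst p) < gen 0 (snd p) \<longleftrightarrow> fst p < snd p"
        using gen_order_zero unfolding S_def by blast
      then show "?A p - ?B p = 0" by simp
    qed
    then show "\<forall>p\<in>Yset n \<times> Yset n - S. ?A p - ?B p = 0" by blast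
  qed (use SY in auto)
  also have "\<dots> = (if desc w 0 then -3 else 3)"
    unfolding S_def using ne by (auto simp: g o1 z d)
  finally have I: "Icnt n (w \<circ> gen 0) = Icnt n w + (if desc w 0 then -3 else 3)" by simp
  let ?C = "\<lambda>x. if 0 < gen 0 x \<and> w x < 0 then 1 else (0::int)"
  let ?D = "\<lambda>x. if 0 < x \<and> w x < 0 then 1 else (0::int)"
  have "negc n (w \<circ> gen 0) - negc n w = (\<Sum>x\<in>Yset n. ?C x - ?D x)"
    using negc_comp[OF k, of w] by (simp add: negc_def sum_subtractf)
  also have "\<dots> = (\<Sum>x\<in>{-1,1}. ?C x - ?D x)"
  proof (rule sum.mono_neutral_right)
    show "\<forall>x\<in>Yset n - {-1,1}. ?C x - ?D x = 0"
      using gen_sign_zero by auto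
  qed (use n1 in \<open>auto simp: Yset_def\<close>)
  also have "\<dots> = (if desc w 0 then -1 else 1)"
    using ne by (auto simp: g o1 d)
  finally have Ng: "negc n (w \<circ> gen 0) = negc n w + (if desc w 0 then -1 else 1)" by simp
  show ?thesis using I Ng unfolding N2_def by simp
qed

lemma N2_step:
  assumes "w \<in> Bn n" "k < n"
  shows "N2 n (w \<circ> gen k) = N2 n w + (if desc w k then -2 else 2)"
  using N2_step_zero[OF assms(1)] N2_step_pos[OF assms] assms(2)
  by (cases "k = 0") auto



lemma N2_nonneg: assumes w: "w \<in> Bn n" shows "0 \<le> N2 n w"
proof -
  let ?f = "\<lambda>x y. if x < y \<and> w y < w x then 1 else (0::int)"
  have "Icnt n w = (\<Sum>x\<in>Yset n. \<Sum>y\<in>Yset n. ?f x y)"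
    unfolding Icnt_def by (subst sum.cartesian_product) (simp add: case_prod_beta)
  also have "\<dots> \<ge> (\<Sum>y\<in>Yset n. ?f 0 y)"
    by (rule member_le_sum) (auto simp: Yset_def intro: sum_nonneg)
  finally have "Icnt n w \<ge> (\<Sum>y\<in>Yset n. ?f 0 y)" .
  moreover have "(\<Sum>y\<in>Yset n. ?f 0 y) = negc n w"
    unfolding negc_def using Bn_zero[OF w] by simp
  ultimately show ?thesis unfolding N2_def by simp
qed

lemma nodesc_id:
  assumes w: "w \<in> Bn n" and H: "\<And>k. k < n \<Longrightarrow> \<not> desc w k"
  shows "w = id"
proof -
  have inj: "w x = w y \<longleftrightarrow> x = y" for x y using Bn_inj[OF w] .
  have lo: "1 \<le> i \<Longrightarrow> i \<le> n \<Longrightarrow> int i \<le> w (int i)" for i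
  proof (induction i)
    case 0 then show ?case by simp
  next
    case (Suc i)
    show ?case
    proof (cases "i = 0")
      case True
      have "\<not> desc w 0" using H Suc.prems by simp
      then have "w 1 \<ge> 0" unfolding desc_def by simp
      moreover have "w 1 \<noteq> 0" using inj[of 1 0] Bn_zero[OF w] by simp
      ultimately show ?thesis using True by simp
    next
      case False
      have "\<not> desc w i" using H Suc.prems by simp
      then have "w (int i + 1) \<ge> w (int i)" unfolding desc_def using False by simp
      moreover have "w (int i + 1) \<noteq> w (int i)" using inj by simp
      moreover have "int i \<le> w (int i)" using Suc False by simp
      ultimately have "int i + 1 \<le> w (int i + 1)" by simp
      then show ?thesis by (metis add.commute of_nat_Suc)
    qed
  qed
  have hi: "j < n \<Longrightarrow> w (int n - int j) \<le> int n - int j" for j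
  proof (induction j)
    case 0
    have "\<bar>w (int n)\<bar> \<le> int n" using Bn_bound[OF w] by simp
    then show ?case by simp
  next
    case (Suc j)
    define i where "i = n - Suc j"
    have i1: "1 \<le> i" "i < n" "int i = int n - int (Suc j)" "int i + 1 = int n - int j"
      using Suc.prems unfolding i_def by auto
    have d: "desc w i = (w (int i + 1) < w (int i))" unfolding desc_def using i1(1) by simp
    have "\<not> desc w i" using H i1 by simp
    then have "w (int i + 1) \<ge> w (int i)" unfolding d by simp
    moreover have "w (int i + 1) \<noteq> w (int i)" using inj by simp
    moreover have "w (int i + 1) \<le> int i + 1" using Suc i1 by simp
    ultimately show ?case using i1 by simp
  qed
  have pos: "1 \<le> i \<Longrightarrow> i \<le> n \<Longrightarrow> w (int i) = int i" for i
    using lo[of i] hi[of "n - i"] by (cases "i = n") (auto simp: of_nat_diff)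
  show ?thesis
  proof
    fix x :: int
    show "w x = id x"
    proof (cases "\<bar>x\<bar> > int n")
      case True then show ?thesis using BnD(3)[OF w] by simp
    next
      case False
      show ?thesis
      proof (cases "x > 0")
        case True
        then show ?thesis using pos[of "nat x"] False by simp
      next
        case nx: False
        show ?thesis
        proof (cases "x = 0")
          case True then show ?thesis using Bn_zero[OF w] by simp
        next
          case x0: False
          have "w (- x) = - x" using pos[of "nat (- x)"] False nx x0 by simp
          then show ?thesis using BnD(2)[OF w, of "-x"] by simp
        qed
      qed
    qed
  qed
qed

lemma N2_id: "N2 n id = 0"
proof -
  have "Icnt n id = 0" unfolding Icnt_def by (rule sum.neutral) auto
  moreover have "negc n id = 0" unfolding negc_def by (rule sum.neutral) auto
  ultimately show ?thesis unfolding N2_def by simp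
qed

lemma desc_N2: assumes "w \<in> Bn n" "k < n" "desc w k" shows "N2 n (w \<circ> gen k) = N2 n w - 2"
  using N2_step[OF assms(1,2)] assms(3) by simp

lemma N2_word: "set ks \<subseteq> {0..<n} \<Longrightarrow> N2 n (word_prod ks) \<le> 2 * int (length ks)"
proof (induction ks rule: rev_induct)
  case Nil then show ?case using N2_id[of n] by (simp add: id_def)
next
  case (snoc k ks)
  have wk: "word_prod ks \<in> Bn n" using snoc.prems by (intro word_prod_in) auto
  have k: "k < n" using snoc.prems by auto
  have ih: "N2 n (word_prod ks) \<le> 2 * int (length ks)" using snoc by auto
  have "N2 n (word_prod (ks @ [k])) = N2 n (word_prod ks \<circ> gen k)" by (simp only: word_prod_snoc)
  also have "\<dots> \<le> N2 n (word_prod ks) + 2" unfolding N2_step[OF wk k] by simp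
  finally show ?case using ih by simp
qed

lemma exists_word:
  assumes "w \<in> Bn n"
  shows "\<exists>ks. set ks \<subseteq> {0..<n} \<and> word_prod ks = w \<and> 2 * int (length ks) = N2 n w"
  using assms
proof (induction "nat (N2 n w)" arbitrary: w rule: less_induct)
  case less
  note w = less.prems
  show ?case
  proof (cases "\<exists>k<n. desc w k")
    case False
    then have "w = id" using nodesc_id[OF w] by blast
    then show ?thesis by (intro exI[of _ "[]"]) (simp add: N2_id)
  next
    case True
    then obtain k where k: "k < n" "desc w k" by blast
    have w': "w \<circ> gen k \<in> Bn n" using w k by (intro Bn_comp gen_in)
    have e: "N2 n (w \<circ> gen k) = N2 n w - 2" using desc_N2[OF w k] .
    have "0 \<le> N2 n (w \<circ> gen k)" using N2_nonneg[OF w'] .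
    then have "nat (N2 n (w \<circ> gen k)) < nat (N2 n w)" using e by simp
    from less.hyps[OF this w'] obtain ks where
      ks: "set ks \<subseteq> {0..<n}" "word_prod ks = w \<circ> gen k" "2 * int (length ks) = N2 n (w \<circ> gen k)"
      by blast
    have "word_prod (ks @ [k]) = w" using ks(2) by (simp add: word_prod_snoc comp_assoc)
    then show ?thesis using ks k e by (intro exI[of _ "ks @ [k]"]) auto
  qed
qed

lemma len_N2:
  assumes "w \<in> Bn n"
  shows "2 * int (len n w) = N2 n w"
proof -
  obtain ks where ks: "set ks \<subseteq> {0..<n}" "word_prod ks = w" "2 * int (length ks) = N2 n w"
    using exists_word[OF assms] by blast
  have "len n w = length ks"
    unfolding len_def
  proof (rule Least_equality)
    show "\<exists>ks'. length ks' = length ks \<and> set ks' \<subseteq> {0..<n} \<and> word_prod ks' = w" using ks by blast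
  next
    fix m assume "\<exists>ks'. length ks' = m \<and> set ks' \<subseteq> {0..<n} \<and> word_prod ks' = w"
    then obtain ks' where "length ks' = m" "set ks' \<subseteq> {0..<n}" "word_prod ks' = w" by blast
    then show "length ks \<le> m" using N2_word[of ks' n] ks(3) by simp
  qed
  then show ?thesis using ks by simp
qed

lemma len_right:
  assumes "w \<in> Bn n" "k < n"
  shows "int (len n (w \<circ> gen k)) = int (len n w) + (if desc w k then -1 else 1)"
proof -
  have w': "w \<circ> gen k \<in> Bn n" using assms by (intro Bn_comp gen_in)
  show ?thesis using len_N2[OF w'] len_N2[OF assms(1)] N2_step[OF assms] by auto
qed

lemma len_inv_le:
  assumes "w \<in> Bn n" shows "len n (inv w) \<le> len n w"
proof -
  obtain ks where ks: "set ks \<subseteq> {0..<n}" "word_prod ks = w" "2 * int (length ks) = N2 n w"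
    using exists_word[OF assms] by blast
  have lw: "len n w = length ks" using len_N2[OF assms] ks(3) by simp
  have "word_prod (rev ks) = inv w" using word_prod_rev_inv ks(2) by simp
  then have "\<exists>ks'. length ks' = length ks \<and> set ks' \<subseteq> {0..<n} \<and> word_prod ks' = inv w"
    using ks(1) by (intro exI[of _ "rev ks"]) auto
  then have "len n (inv w) \<le> length ks" unfolding len_def by (rule Least_le)
  then show ?thesis using lw by simp
qed

lemma len_inv:
  assumes "w \<in> Bn n" shows "len n (inv w) = len n w"
  using len_inv_le[OF assms] len_inv_le[OF Bn_inv[OF assms]] inv_inv_Bn[OF assms] by simp



lemma comm_alg:
 fixes hv hsv hvt hsvt qs qt :: real and a lsv lvt lsvt :: int
 assumes "lsv = a+1 \<or> lsv = a-1" "lvt = a+1 \<or> lvt = a-1" "lsvt = lsv+1 \<or> lsvt = lsv-1" "lsvt = lvt+1 \<or> lsvt = lvt - 1"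
 and h1: "lvt = a+1 \<Longrightarrow> lsvt = lsv - 1 \<Longrightarrow> hsv = hvt \<and> qs = qt"
 and h2: "lsvt = lsv + 1 \<Longrightarrow> lvt = a - 1 \<Longrightarrow> hsv = hvt \<and> hsvt = hv \<and> qs = qt"
 shows "(if lsv < a then (if lsvt < lsv then hsvt + (1-qt)*hsv else qt*hsvt) + (1-qs)*(if lvt < a then hvt + (1-qt)*hv else qt*hvt) else qs*(if lsvt < lsv then hsvt + (1-qt)*hsv else qt*hsvt)) = (if lvt < a then (if lsvt < lvt then hsvt + (1-qs)*hvt else qs*hsvt) + (1-qt)*(if lsv < a then hsv + (1-qs)*hv else qs*hsv) else qt*(if lsvt < lvt then hsvt + (1-qs)*hvt else qs*hsvt))"
  using assms(1-4)
proof (elim disjE)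
qed (use h1 h2 in \<open>auto simp: algebra_simps\<close>)

lemma gen_flip:
  assumes "1 \<le> k" "a < b" "gen k b < gen k a"
  shows "gen k a = b \<and> gen k b = a \<and> (\<forall>y. y \<notin> {a, b, -a, -b} \<longrightarrow> gen k y = y)"
  using assms unfolding gen_def by (auto split: if_splits)

lemma gen_flip0:
  assumes "a < b" "gen 0 b < gen 0 a" "a \<noteq> 0" "b \<noteq> 0"
  shows "a = -1 \<and> b = 1"
  using assms unfolding gen_def by (auto split: if_splits)

lemma gen_neg_pos: "1 \<le> k \<Longrightarrow> gen k x < 0 \<longleftrightarrow> x < 0"
  unfolding gen_def by auto

lemma hard:
  assumes x: "x \<in> Bn n" and k: "k < n" and j: "j < n"
    and nd: "\<not> desc x j" and d: "desc (gen k \<circ> x) j"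
  shows "gen k \<circ> x = x \<circ> gen j \<and> (k = 0 \<longleftrightarrow> j = 0)"
proof -
  have inj: "x a = x b \<longleftrightarrow> a = b" for a b using Bn_inj[OF x] .
  have odd: "x (-i) = - x i" for i using BnD(2)[OF x] .
  have x0: "x 0 = 0" using Bn_zero[OF x] .
  show ?thesis
  proof (cases "j = 0")
    case True
    have a: "0 \<le> x 1" "gen k (x 1) < 0" using nd d True unfolding desc_def by auto
    have a1: "x 1 \<noteq> 0" using inj[of 1 0] x0 by simp
    have k0: "k = 0"
    proof (rule ccontr)
      assume "k \<noteq> 0"
      then have "gen k (x 1) < 0 \<longleftrightarrow> x 1 < 0" using gen_neg_pos[of k] by simp
      then show False using a by simp
    qed
    have x1: "x 1 = 1" using a a1 k0 unfolding gen_def by (auto split: if_splits)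
    have xm1: "x (-1) = -1" using odd[of 1] x1 by simp
    have "gen 0 (x i) = x (gen 0 i)" for i
    proof -
      consider "i = 1" | "i = -1" | "i \<noteq> 1" "i \<noteq> -1" by blast
      then show ?thesis
      proof cases
        case 3
        then have "x i \<noteq> 1" "x i \<noteq> -1" using inj[of i 1] inj[of i "-1"] x1 xm1 by auto
        then show ?thesis using 3 unfolding gen_def by simp
      qed (auto simp: x1 xm1 gen_def)
    qed
    then show ?thesis using k0 True by (auto simp: fun_eq_iff)
  next
    case False
    define J where "J = int j"
    have J1: "1 \<le> J" using False unfolding J_def by simp
    have dd: "desc y j = (y (J + 1) < y J)" for y unfolding desc_def J_def using False by simp
    have ab: "x J < x (J + 1)" using nd inj[of J "J+1"] unfolding dd by auto
    have ba: "gen k (x (J + 1)) < gen k (x J)" using d unfolding dd by simp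
    have xJ0: "x J \<noteq> 0" "x (J + 1) \<noteq> 0" using inj[of J 0] inj[of "J+1" 0] x0 J1 by auto
    have k0: "k \<noteq> 0"
    proof
      assume "k = 0"
      then have "x J = -1 \<and> x (J + 1) = 1" using gen_flip0[OF ab _ xJ0] ba by simp
      then have "x (- J) = x (J + 1)" using odd[of J] by simp
      then show False using inj J1 by simp
    qed
    then have k1: "1 \<le> k" by simp
    have fl: "gen k (x J) = x (J+1)" "gen k (x (J+1)) = x J"
       "\<And>y. y \<notin> {x J, x (J+1), - x J, - x (J+1)} \<Longrightarrow> gen k y = y"
      using gen_flip[OF k1 ab ba] by auto
    have gj: "gen j J = J + 1" "gen j (J + 1) = J" "gen j (-J) = -J - 1" "gen j (-J - 1) = -J"
      using J1 unfolding gen_def J_def by auto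
    have o1: "x (-J) = - x J" using odd[of J] .
    have o2: "x (-J - 1) = - x (J + 1)" using odd[of "J+1"] by (metis minus_diff_eq diff_minus_eq_add add.commute minus_add_distrib diff_conv_add_uminus)
    have "gen k (x i) = x (gen j i)" for i
    proof -
      consider "i = J" | "i = J + 1" | "i = -J" | "i = -J - 1" | "i \<notin> {J, J+1, -J, -J-1}" by blast
      then show ?thesis
      proof cases
        case 1 then show ?thesis using fl gj by simp
      next
        case 2 then show ?thesis using fl gj by simp
      next
        case 3
        have "gen k (x i) = - x (J + 1)" using 3 o1 gen_odd[of k "x J"] fl(1) by simp
        moreover have "x (gen j i) = - x (J + 1)" using 3 gj(3) o2 by simp
        ultimately show ?thesis by simp
      next
        case 4
        have "gen k (x i) = - x J" using 4 o2 gen_odd[of k "x (J+1)"] fl(2) by simp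
        moreover have "x (gen j i) = - x J" using 4 gj(4) o1 by simp
        ultimately show ?thesis by simp
      next
        case 5
        have gi: "gen j i = i" using 5 J1 unfolding gen_def J_def by auto
        have "x i \<noteq> x J" "x i \<noteq> x (J+1)" "x i \<noteq> x (-J)" "x i \<noteq> x (-J - 1)"
          using 5 inj by blast+
        then have "x i \<notin> {x J, x (J+1), - x J, - x (J+1)}" using o1 o2 by auto
        then show ?thesis using fl(3) gi by simp
      qed
    qed
    then show ?thesis using False k0 by (auto simp: fun_eq_iff)
  qed
qed

definition Rmul :: "nat \<Rightarrow> real \<Rightarrow> real \<Rightarrow> nat \<Rightarrow> ((int \<Rightarrow> int) \<Rightarrow> real) \<Rightarrow> ((int \<Rightarrow> int) \<Rightarrow> real)" where
  "Rmul n q r j h = iota n (Tmul n q r j (iota n h))"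

lemma inv_comp_gen: assumes "x \<in> Bn n" shows "inv (x \<circ> gen j) = gen j \<circ> inv x"
  using o_inv_distrib[of x "gen j"] BnD(1)[OF assms] bij_gen inv_gen by simp

lemma inv_gen_comp: assumes "x \<in> Bn n" shows "inv (gen j \<circ> x) = inv x \<circ> gen j"
  using o_inv_distrib[of "gen j" x] BnD(1)[OF assms] bij_gen inv_gen by simp

lemma iota_apply: "iota n h w = (if w \<in> Bn n then h (inv w) else 0)"
  by (simp add: iota_def)

lemma iota_inv: "x \<in> Bn n \<Longrightarrow> iota n h (inv x) = h x"
  unfolding iota_def using Bn_inv inv_inv_Bn by simp

lemma Rmul_eval:
  assumes v: "v \<in> Bn n" and j: "j < n"
  shows "Rmul n q r j h v = (if len n (v \<circ> gen j) < len n v then h (v \<circ> gen j) + (1 - qpar q r j) * h v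
           else qpar q r j * h (v \<circ> gen j))"
proof -
  have vi: "inv v \<in> Bn n" using Bn_inv[OF v] .
  have vt: "v \<circ> gen j \<in> Bn n" using v j by (intro Bn_comp gen_in)
  have e: "gen j \<circ> inv v = inv (v \<circ> gen j)" using inv_comp_gen[OF v] by simp
  have 1: "Rmul n q r j h v = Tmul n q r j (iota n h) (inv v)"
    unfolding Rmul_def by (subst iota_apply) (simp add: v)
  have 2: "Tmul n q r j (iota n h) (inv v) = (if len n (gen j \<circ> inv v) < len n (inv v)
     then iota n h (gen j \<circ> inv v) + (1 - qpar q r j) * iota n h (inv v)
     else qpar q r j * iota n h (gen j \<circ> inv v))" using vi by (simp add: Tmul_def)
  show ?thesis unfolding 1 2 e len_inv[OF v] len_inv[OF vt] iota_inv[OF v] iota_inv[OF vt] ..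
qed

lemma Tmul_eval:
  assumes v: "v \<in> Bn n"
  shows "Tmul n q r k h v = (if len n (gen k \<circ> v) < len n v then h (gen k \<circ> v) + (1 - qpar q r k) * h v
           else qpar q r k * h (gen k \<circ> v))"
  unfolding Tmul_def using v by simp

lemma len_left:
  assumes v: "v \<in> Bn n" and k: "k < n"
  shows "int (len n (gen k \<circ> v)) = int (len n v) + (if desc (inv v) k then -1 else 1)"
proof -
  have kv: "gen k \<circ> v \<in> Bn n" using v k by (intro Bn_comp gen_in)
  have "len n (gen k \<circ> v) = len n (inv v \<circ> gen k)"
    using len_inv[OF kv] inv_gen_comp[OF v] by simp
  then show ?thesis using len_right[OF Bn_inv[OF v] k] len_inv[OF v] by simp
qed

lemma comm:
  assumes k: "k < n" and j: "j < n"
  shows "Tmul n q r k (Rmul n q r j h) v = Rmul n q r j (Tmul n q r k h) v"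
proof (cases "v \<in> Bn n")
  case False
  then show ?thesis by (simp add: Tmul_def Rmul_def iota_apply)
next
  case v: True
  define sv where "sv = gen k \<circ> v"
  define vt where "vt = v \<circ> gen j"
  define svt where "svt = sv \<circ> gen j"
  have svt2: "gen k \<circ> vt = svt" unfolding sv_def vt_def svt_def by (simp add: comp_assoc)
  have sv: "sv \<in> Bn n" unfolding sv_def using v k by (intro Bn_comp gen_in)
  have vt: "vt \<in> Bn n" unfolding vt_def using v j by (intro Bn_comp gen_in)
  let ?qs = "qpar q r k" and ?qt = "qpar q r j"
  have L: "Tmul n q r k (Rmul n q r j h) v =
    (if len n sv < len n v then
       (if len n svt < len n sv then h svt + (1 - ?qt) * h sv else ?qt * h svt)
       + (1 - ?qs) * (if len n vt < len n v then h vt + (1 - ?qt) * h v else ?qt * h vt)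
     else ?qs * (if len n svt < len n sv then h svt + (1 - ?qt) * h sv else ?qt * h svt))"
    unfolding Tmul_eval[OF v] sv_def[symmetric] Rmul_eval[OF sv j] Rmul_eval[OF v j]
      vt_def[symmetric] svt_def[symmetric] ..
  have R: "Rmul n q r j (Tmul n q r k h) v =
    (if len n vt < len n v then
       (if len n svt < len n vt then h svt + (1 - ?qs) * h vt else ?qs * h svt)
       + (1 - ?qt) * (if len n sv < len n v then h sv + (1 - ?qs) * h v else ?qs * h sv)
     else ?qt * (if len n svt < len n vt then h svt + (1 - ?qs) * h vt else ?qs * h svt))"
    unfolding Rmul_eval[OF v j] vt_def[symmetric] Tmul_eval[OF vt] Tmul_eval[OF v] svt2 sv_def[symmetric] ..
  have Lsv: "int (len n sv) = int (len n v) + (if desc (inv v) k then -1 else 1)"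
    unfolding sv_def by (rule len_left[OF v k])
  have Lvt: "int (len n vt) = int (len n v) + (if desc v j then -1 else 1)"
    unfolding vt_def by (rule len_right[OF v j])
  have Lsvt1: "int (len n svt) = int (len n sv) + (if desc sv j then -1 else 1)"
    unfolding svt_def by (rule len_right[OF sv j])
  have Lsvt2: "int (len n svt) = int (len n vt) + (if desc (inv vt) k then -1 else 1)"
    unfolding svt2[symmetric] by (rule len_left[OF vt k])
  have qq: "(k = 0 \<longleftrightarrow> j = 0) \<Longrightarrow> ?qs = ?qt" by (simp add: qpar_def)
  have h1: "h sv = h vt \<and> ?qs = ?qt"
    if "int (len n vt) = int (len n v) + 1" "int (len n svt) = int (len n sv) - 1"
  proof -
    have "\<not> desc v j" "desc (gen k \<circ> v) j" using that Lvt Lsvt1 unfolding sv_def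
      by (auto split: if_splits)
    from hard[OF v k j this] show ?thesis using qq unfolding sv_def vt_def by auto
  qed
  have h2: "h sv = h vt \<and> h svt = h v \<and> ?qs = ?qt"
    if "int (len n svt) = int (len n sv) + 1" "int (len n vt) = int (len n v) - 1"
  proof -
    have e: "gen k \<circ> sv = v" unfolding sv_def by (simp add: comp_assoc[symmetric])
    have "\<not> desc sv j" "desc (gen k \<circ> sv) j" using that Lvt Lsvt1 unfolding e
      by (auto split: if_splits)
    from hard[OF sv k j this] have hh: "v = svt" "k = 0 \<longleftrightarrow> j = 0"
      unfolding e svt_def by auto
    have "vt = sv" unfolding vt_def hh(1) svt_def by (simp add: comp_assoc)
    then show ?thesis using hh qq by auto
  qed
  show ?thesis unfolding L R
    using comm_alg[where a = "int (len n v)" and lsv = "int (len n sv)" and lvt = "int (len n vt)"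
       and lsvt = "int (len n svt)" and hv = "h v" and hsv = "h sv" and hvt = "h vt" and hsvt = "h svt"
       and qs = ?qs and qt = ?qt] Lsv Lvt Lsvt1 Lsvt2 h1 h2
    by (auto split: if_splits)
qed



definition hsupp :: "nat \<Rightarrow> ((int \<Rightarrow> int) \<Rightarrow> real) \<Rightarrow> bool" where
  "hsupp n h = (\<forall>w. w \<notin> Bn n \<longrightarrow> h w = 0)"

lemma iota_iota: "hsupp n h \<Longrightarrow> iota n (iota n h) = h"
  unfolding hsupp_def by (auto simp: fun_eq_iff iota_apply Bn_inv inv_inv_Bn)

lemma hsupp_Tmul: "hsupp n (Tmul n q r k h)"
  unfolding hsupp_def Tmul_def by simp

lemma iota_Tmul: "hsupp n h \<Longrightarrow> iota n (Tmul n q r k h) = Rmul n q r k (iota n h)"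
  unfolding Rmul_def by (simp add: iota_iota)

lemma Wword_snoc: "Wword n q r (ks @ [k]) = Tmul n q r k (Wword n q r ks)"
  unfolding Wword_def by simp

lemma hsupp_base: "hsupp n (basisT id)"
  unfolding hsupp_def basisT_def using Bn_id by auto

lemma hsupp_Wword: "hsupp n (Wword n q r ks)"
  by (induction ks rule: rev_induct) (auto simp: Wword_snoc hsupp_Tmul hsupp_base Wword_def)

lemma iota_base: "iota n (basisT id) = basisT id"
proof
  fix w
  show "iota n (basisT id) w = basisT id w"
  proof (cases "w \<in> Bn n")
    case True
    have "inv w = id \<longleftrightarrow> w = id"
      using inv_inv_Bn[OF True] by (metis inv_id)
    then show ?thesis using True by (simp add: iota_apply basisT_def)
  next
    case False
    then show ?thesis using Bn_id by (auto simp: iota_apply basisT_def)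
  qed
qed

lemma iota_Wword: "iota n (Wword n q r ks) = foldl (\<lambda>h k. Rmul n q r k h) (basisT id) ks"
proof (induction ks rule: rev_induct)
  case Nil then show ?case by (simp only: Wword_def foldl_Nil iota_base rev.simps)
next
  case (snoc k ks)
  then show ?case by (simp add: Wword_snoc iota_Tmul hsupp_Wword)
qed

lemma R_fold:
  assumes "set ks \<subseteq> {0..<n}" "j < n"
  shows "Rmul n q r j (foldl (\<lambda>h k. Tmul n q r k h) h ks) = foldl (\<lambda>h k. Tmul n q r k h) (Rmul n q r j h) ks"
  using assms
proof (induction ks arbitrary: h)
  case Nil then show ?case by simp
next
  case (Cons k ks)
  have "Rmul n q r j (Tmul n q r k h) = Tmul n q r k (Rmul n q r j h)"
    using comm[of k n j q r h] Cons.prems by (auto simp: fun_eq_iff)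
  then show ?case using Cons by simp
qed

lemma Rmul_base:
  assumes j: "j < n"
  shows "Rmul n q r j (basisT id) = Tmul n q r j (basisT id)"
proof
  fix v
  show "Rmul n q r j (basisT id) v = Tmul n q r j (basisT id) v"
  proof (cases "v \<in> Bn n")
    case False then show ?thesis by (simp add: Tmul_def Rmul_def iota_apply)
  next
    case v: True
    have e1: "v \<circ> gen j = id \<longleftrightarrow> v = gen j"
      by (metis comp_id gen_comp_gen o_assoc)
    have e2: "gen j \<circ> v = id \<longleftrightarrow> v = gen j"
      by (metis comp_id gen_comp_gen o_assoc id_comp)
    consider "v = id" | "v = gen j" | "v \<noteq> id" "v \<noteq> gen j" by blast
    then show ?thesis
    proof cases
      case 1 then show ?thesis using Rmul_eval[OF v j] Tmul_eval[OF v] by simp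
    next
      case 2 then show ?thesis using Rmul_eval[OF v j] Tmul_eval[OF v] by simp
    next
      case 3 then show ?thesis using Rmul_eval[OF v j, of q r "basisT id"] Tmul_eval[OF v, of q r j "basisT id"] e1 e2
        by (simp add: basisT_def)
    qed
  qed
qed

lemma iota_Wword_rev:
  assumes "set ks \<subseteq> {0..<n}"
  shows "iota n (Wword n q r ks) = Wword n q r (rev ks)"
  using assms
proof (induction ks rule: rev_induct)
  case Nil then show ?case by (simp only: Wword_def foldl_Nil iota_base rev.simps)
next
  case (snoc k ks)
  have k: "k < n" and ks: "set ks \<subseteq> {0..<n}" using snoc.prems by auto
  have "iota n (Wword n q r (ks @ [k])) = Rmul n q r k (iota n (Wword n q r ks))"
    by (simp add: Wword_snoc iota_Tmul hsupp_Wword)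
  also have "\<dots> = Rmul n q r k (Wword n q r (rev ks))" using snoc.IH ks by simp
  also have "\<dots> = foldl (\<lambda>h k. Tmul n q r k h) (Rmul n q r k (basisT id)) (rev ks)"
    unfolding Wword_def by (rule R_fold) (use ks k in auto)
  also have "\<dots> = Wword n q r (rev (ks @ [k]))"
    unfolding Rmul_base[OF k] Wword_def by simp
  finally show ?case .
qed



lemma rep_snoc: "replicate_pmf (Suc m) p = bind_pmf (replicate_pmf m p) (\<lambda>xs. bind_pmf p (\<lambda>x. return_pmf (xs @ [x])))"
proof -
  have "replicate_pmf (Suc m) p = replicate_pmf (m + 1) p" by (simp only: Suc_eq_plus1)
  also have "\<dots> = bind_pmf (replicate_pmf m p) (\<lambda>xs. bind_pmf (replicate_pmf 1 p) (\<lambda>ys. return_pmf (xs @ ys)))"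
    by (rule replicate_pmf_distrib)
  also have "\<dots> = bind_pmf (replicate_pmf m p) (\<lambda>xs. bind_pmf p (\<lambda>x. return_pmf (xs @ [x])))"
    by (simp add: bind_assoc_pmf bind_return_pmf)
  finally show ?thesis .
qed

lemma rep_rev: "map_pmf rev (replicate_pmf m p) = replicate_pmf m p"
proof (induction m)
  case 0 then show ?case by simp
next
  case (Suc m)
  have "map_pmf rev (replicate_pmf (Suc m) p) = bind_pmf p (\<lambda>x. bind_pmf (replicate_pmf m p) (\<lambda>xs. return_pmf (rev xs @ [x])))"
    by (simp add: map_bind_pmf map_return_pmf)
  also have "\<dots> = bind_pmf p (\<lambda>x. bind_pmf (map_pmf rev (replicate_pmf m p)) (\<lambda>xs. return_pmf (xs @ [x])))"
    by (simp add: bind_map_pmf)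
  also have "\<dots> = bind_pmf p (\<lambda>x. bind_pmf (replicate_pmf m p) (\<lambda>xs. return_pmf (xs @ [x])))"
    using Suc.IH by simp
  also have "\<dots> = bind_pmf (replicate_pmf m p) (\<lambda>xs. bind_pmf p (\<lambda>x. return_pmf (xs @ [x])))"
    by (rule bind_commute_pmf)
  also have "\<dots> = replicate_pmf (Suc m) p" by (rule rep_snoc[symmetric])
  finally show ?case .
qed

lemma label_set:
  assumes "n \<ge> 1" "\<alpha> > 0"
  shows "set_pmf (label_pmf n \<alpha>) \<subseteq> {0..<n}"
proof
  fix x assume x: "x \<in> set_pmf (label_pmf n \<alpha>)"
  define p where "p = \<alpha> / (\<alpha> + real n - 1)"
  have p: "0 \<le> p" "p \<le> 1" unfolding p_def using assms by auto
  from x obtain b where b: "b \<in> set_pmf (bernoulli_pmf p)"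
    "x \<in> set_pmf (if b then return_pmf 0 else map_pmf Suc (pmf_of_set {0..<n - 1}))"
    unfolding label_pmf_def p_def by auto
  show "x \<in> {0..<n}"
  proof (cases b)
    case True then show ?thesis using b assms by auto
  next
    case False
    have n2: "n \<ge> 2"
    proof (rule ccontr)
      assume "\<not> n \<ge> 2"
      then have "n = 1" using assms by simp
      then have "p = 1" unfolding p_def using assms by simp
      then have "pmf (bernoulli_pmf p) False = 0" by simp
      then show False using b(1) False by (simp add: set_pmf_iff)
    qed
    have "{0..<n - 1} \<noteq> {}" using n2 by simp
    then show ?thesis using b(2) False n2 by auto
  qed
qed

theorem lemma3p4:
  fixes n :: nat and q \<alpha> \<gamma> r t :: real
  assumes "n \<ge> 1"
    and "0 < q" and "q < 1"
    and "0 < \<gamma>" and "\<gamma> < \<alpha>"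
    and "r = \<gamma> / \<alpha>"
    and "t \<ge> 0"
  shows "map_pmf (iota n) (W_law n q r \<alpha> t) = W_law n q r \<alpha> t"
proof -
  have a: "\<alpha> > 0" using assms by simp
  let ?R = "rings_pmf n \<alpha> t"
  have rs: "set ks \<subseteq> {0..<n}" if "ks \<in> set_pmf ?R" for ks
    using that label_set[OF assms(1) a] unfolding rings_pmf_def
    by (auto simp: set_replicate_pmf)
  have rr: "map_pmf rev ?R = ?R"
    unfolding rings_pmf_def by (simp add: map_bind_pmf rep_rev)
  have "map_pmf (iota n) (W_law n q r \<alpha> t) = map_pmf (\<lambda>ks. iota n (Wword n q r ks)) ?R"
    unfolding W_law_def by (simp add: map_pmf_comp)
  also have "\<dots> = map_pmf (\<lambda>ks. Wword n q r (rev ks)) ?R"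
    by (rule map_pmf_cong) (auto simp: iota_Wword_rev rs)
  also have "\<dots> = map_pmf (Wword n q r) (map_pmf rev ?R)"
    by (simp add: map_pmf_comp)
  also have "\<dots> = W_law n q r \<alpha> t" unfolding rr W_law_def ..
  finally show ?thesis .
qed


end
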